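(* Let $a=p^\gamma$ where $p$ is an odd prime and $\gamma\ge1$. Let $G=(\mathbb{Z}/a\mathbb{Z})^*$ and let $H$ be the maximal subgroup of $G$ of odd order (equivalently, the unique maximal subgroup of $G$ not containing the class of $-1$). Then \[ \{n\in\mathbb{N}:\ \text{every prime } q \text{ dividing } n \text{ satisfies } q \bmod a\in H\}\subseteq\mathcal{E}^*_a . \]
   Context: For a positive integer $n$, let $R(n;a)$ be the number of pairs $(x,y)$ of positive integers with $\frac{a}{n}=\frac1x+\frac1y$. Let $\mathcal{E}^*_a=\{n\in\mathbb{N}: R(n;a)=0,\ \gcd(n,a)=1\}$. If $\phi(a)=2^m d$ with $d$ odd and $g$ is a primitive root modulo $a$, then $H=\{g^{2^m j}:1\le j\le d\}$, of index $2^m$ in $G$. *)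

theory Defs
  imports "HOL-Number_Theory.Number_Theory"
begin

definition R :: "nat \<Rightarrow> nat \<Rightarrow> nat" where
  "R n a = card {(x, y). x > (0::nat) \<and> y > (0::nat) \<and>
      (of_nat a / of_nat n :: rat) = 1 / of_nat x + 1 / of_nat y}"

definition Estar :: "nat \<Rightarrow> nat set" where
  "Estar a = {n. n > 0 \<and> R n a = 0 \<and> gcd n a = 1}"

definition Hsub :: "nat \<Rightarrow> nat \<Rightarrow> nat set" where
  "Hsub a g = (let m = multiplicity 2 (totient a); d = totient a div 2 ^ m
               in {g ^ (2 ^ m * j) mod a | j. 1 \<le> j \<and> j \<le> d})"

end

theory Submission
  imports Defs
begin

lemma pow_primes_cong:
  fixes a d :: nat
  shows "m > 0 \<Longrightarrow> (\<forall>q. prime q \<and> q dvd m \<longrightarrow> [q^d = 1] (mod a)) \<Longrightarrow> [m^d = 1] (mod a)"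
proof (induction m rule: less_induct)
  case (less m)
  show ?case
  proof (cases "m = 1")
    case True then show ?thesis by simp
  next
    case False
    then obtain q where q: "prime q" "q dvd m" using prime_factor_nat by blast
    then obtain k where m: "m = q*k" by (auto elim: dvdE)
    have q1: "q > 1" using q prime_gt_1_nat by blast
    have k0: "k > 0" using less.prems m by (cases k) auto
    have km: "k < m" using m q1 k0 by simp
    have kf: "[k^d = 1] (mod a)"
      using less.IH[OF km k0] less.prems(2) m by (metis dvd_mult2 mult.commute)
    moreover have qf: "[q^d = 1] (mod a)" using less.prems(2) q by blast
    have "[q^d * k^d = 1 * 1] (mod a)" using cong_mult[OF qf kf] .
    then show ?thesis by (simp add: m power_mult_distrib)
  qed
qed

theorem lemma2p3:
  fixes p \<gamma> a g :: nat
  assumes "prime p" and "odd p" and "\<gamma> \<ge> 1" and "a = p ^ \<gamma>"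
    and "residue_primroot a g"
  shows "{n. n > 0 \<and> (\<forall>q. prime q \<and> q dvd n \<longrightarrow> q mod a \<in> Hsub a g)} \<subseteq> Estar a"
proof
  fix n assume "n \<in> {n. n > 0 \<and> (\<forall>q. prime q \<and> q dvd n \<longrightarrow> q mod a \<in> Hsub a g)}"
  hence n0: "n > 0" and nq: "\<And>q. prime q \<Longrightarrow> q dvd n \<Longrightarrow> q mod a \<in> Hsub a g" by auto
  define m where "m = multiplicity 2 (totient a)"
  define d where "d = totient a div 2 ^ m"
  have p2: "p \<ge> 2" using prime_ge_2_nat[OF assms(1)] .
  have "p \<noteq> 2" using assms(2) by auto
  hence p3: "p \<ge> 3" using p2 by linarith
  have "p^1 \<le> p^\<gamma>" by (rule power_increasing) (use assms(3) p3 in auto)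
  hence ap: "a \<ge> p" using assms(4) by simp
  have a3: "a \<ge> 3" using ap p3 by simp
  have cop: "coprime g a" and ord: "ord a g = totient a"
    using assms(5) by (auto simp: residue_primroot_def coprime_commute)
  have tpos: "totient a > 0" using a3 by simp
  have dodd: "odd d" unfolding d_def m_def
    by (rule multiplicity_decompose) (use tpos in auto)
  have md: "2^m * d = totient a" unfolding d_def m_def by (rule dvd_mult_div_cancel[OF multiplicity_dvd])
  have H: "[q^d = 1] (mod a)" if "q mod a \<in> Hsub a g" for q
  proof -
    from that obtain j where j: "q mod a = g ^ (2^m * j) mod a"
      unfolding Hsub_def Let_def m_def by auto
    have "[q = g ^ (2^m * j)] (mod a)" using j by (simp add: cong_def)
    hence "[q^d = (g ^ (2^m * j))^d] (mod a)" by (rule cong_pow)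
    moreover have "(g ^ (2^m * j))^d = (g ^ totient a)^j"
      proof -
      have e: "2^m * j * d = totient a * j" using md by (simp add: mult.commute mult.left_commute)
      show ?thesis by (simp only: power_mult[symmetric] e)
    qed
    moreover have "[(g ^ totient a)^j = 1^j] (mod a)"
      by (rule cong_pow) (rule euler_theorem[OF cop])
    ultimately show ?thesis by (metis cong_trans power_one)
  qed
  have divs: "[x^d = 1] (mod a)" if "x dvd n" for x
  proof (rule pow_primes_cong)
    show "x > 0" using that n0 by (metis dvd_0_left_iff gr0I not_less0)
    show "\<forall>q. prime q \<and> q dvd x \<longrightarrow> [q ^ d = 1] (mod a)"
      using H nq that dvd_trans by blast
  qed
  have gcd1: "gcd n a = 1"
  proof (rule ccontr)
    assume "gcd n a \<noteq> 1"
    then obtain r where r: "prime r" "r dvd gcd n a" using prime_factor_nat by blast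
    hence "r dvd a" by auto
    hence "r dvd p" using assms(4) r(1) prime_dvd_power by blast
    hence "r = p" using assms(1) r(1) by (auto simp: prime_nat_iff)
    hence "p dvd n" using r by auto
    hence c: "[p^d = 1] (mod a)" using divs by blast
    moreover have "p dvd a" using assms(3,4) by (simp add: dvd_power)
    ultimately have c2: "[p^d = 1] (mod p)" by (rule cong_dvd_modulus_nat)
    have "p dvd p^d" using dodd by (cases d) auto
    hence "p dvd 1" using cong_dvd_iff[OF c2] by blast
    thus False using assms(1) by auto
  qed
  have R0: "R n a = 0"
  proof -
    have E: "{(x, y). x > (0::nat) \<and> y > (0::nat) \<and>
      (of_nat a / of_nat n :: rat) = 1 / of_nat x + 1 / of_nat y} = {}"
    proof (rule ccontr)
      assume "\<not> ?thesis"
      then obtain x y where x0: "x > (0::nat)" and y0: "y > (0::nat)" and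
        eq: "(of_nat a / of_nat n :: rat) = 1 / of_nat x + 1 / of_nat y" by auto
      have "(of_nat (a*x*y) :: rat) = of_nat (n*(x+y))"
        using eq x0 y0 n0 by (simp add: field_simps)
      hence e1: "a*x*y = n*(x+y)" by (simp only: of_nat_eq_iff)
      define g0 where "g0 = gcd x y"
      have g0p: "g0 > 0" using x0 g0_def by simp
      have "\<exists>X Y. x = X*g0 \<and> y = Y*g0 \<and> coprime X Y"
        unfolding g0_def by (rule gcd_coprime_exists) (use x0 in simp)
      then obtain X Y where X: "x = X*g0" and Y: "y = Y*g0" and cXY: "coprime X Y"
        by blast
      have X0: "X > 0" and Y0: "Y > 0" using X Y x0 y0 by auto
      have "g0 * (a*X*Y*g0) = g0 * (n*(X+Y))" using e1 X Y by (simp add: algebra_simps)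
      moreover have "g0 \<noteq> 0" using g0p by simp
      ultimately have e2: "a*X*Y*g0 = n*(X+Y)" using mult_left_cancel[of g0 "a*X*Y*g0" "n*(X+Y)"] by blast
      have g1: "gcd X Y = 1" using cXY by (rule coprime_imp_gcd_eq_1)
      have cX1: "coprime X (X+Y)" by (rule gcd_eq_1_imp_coprime) (rule trans[OF gcd_add2 g1])
      have "gcd Y (X+Y) = gcd Y (Y+X)" by (simp only: add.commute)
      also have "\<dots> = gcd Y X" by (rule gcd_add2)
      also have "\<dots> = 1" using g1 by (simp only: gcd.commute)
      finally have cY1: "coprime Y (X+Y)" by (rule gcd_eq_1_imp_coprime)
      have c1: "coprime (X*Y) (X+Y)" using cX1 cY1 by simp
      have "n*(X+Y) = X*Y*(a*g0)" using e2 by (simp add: ac_simps)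
      hence "X*Y dvd n*(X+Y)" by (rule dvdI)
      hence "X*Y dvd n" using c1 coprime_dvd_mult_left_iff by blast
      then obtain t where t: "n = X*Y*t" by (auto elim: dvdE)
      have "(X*Y) * (a*g0) = (X*Y) * (t*(X+Y))" using e2 t by (simp add: algebra_simps)
      hence "a*g0 = t*(X+Y)" using X0 Y0 by simp
      hence "a dvd t*(X+Y)" by (metis dvdI)
      moreover have "coprime n a" using gcd1 by (rule gcd_eq_1_imp_coprime)
      hence "coprime (X*Y*t) a" using t by simp
      hence "coprime t a" by simp
      hence "coprime a t" by (simp add: coprime_commute)
      ultimately have adv: "a dvd X+Y" using coprime_dvd_mult_right_iff by blast
      have cX: "[X^d = 1] (mod a)" using divs t by auto
      have cY: "[Y^d = 1] (mod a)" using divs t by auto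
      have iX: "[int X ^ d = 1] (mod int a)" using cX by (metis cong_int_iff of_nat_1 of_nat_power)
      have iY: "[int Y ^ d = 1] (mod int a)" using cY by (metis cong_int_iff of_nat_1 of_nat_power)
      have "[int X = - int Y] (mod int a)" using adv
        by (simp add: cong_iff_dvd_diff int_dvd_int_iff[symmetric] del: int_dvd_int_iff)
      hence "[int X ^ d = (- int Y) ^ d] (mod int a)" by (rule cong_pow)
      hence "[int X ^ d = - (int Y ^ d)] (mod int a)" using dodd by simp
      hence "[1 = - 1] (mod int a)" using iX iY
        by (meson cong_minus_minus_iff cong_sym cong_trans)
      hence "int a dvd 2" by (simp add: cong_iff_dvd_diff)
      hence "a dvd 2" by presburger
      hence "a \<le> 2" by (simp add: dvd_imp_le)
      thus False using a3 by simp
    qed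
    show ?thesis unfolding R_def E by (rule card.empty)
  qed
  show "n \<in> Estar a" unfolding Estar_def using n0 R0 gcd1 by simp
qed

end
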